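(* Let $(S,\to)$ be a labelled transition system with a merge $\|$. If $s\leftrightarrow_b^{\Delta}t$ and $u\leftrightarrow_b^{\Delta}v$, then $s\|u\leftrightarrow_b^{\Delta}t\|v$.
   Context: Fix a set $\mathrm{Act}$ of actions containing a special action $\tau$. A labelled transition system (LTS) is a pair $(S,\to)$ with $S$ a set of states and $\to\subseteq S\times\mathrm{Act}\times S$; write $s\xrightarrow{a}s'$ for $(s,a,s')\in\to$. A path from $s$ is an alternating sequence $s_0,a_1,s_1,a_2,\dots$ of states and actions, ending with a state if finite, with $s_0=s$ and $s_{k-1}\xrightarrow{a_k}s_k$ for all relevant $k$. A colouring is a function $\mathcal{C}$ from $S$ to an arbitrary set of colours. For a path $\pi=s_0,a_1,s_1,\dots$, $\mathcal{C}(\pi)$ is the alternating sequence obtained from $\mathcal{C}(s_0),a_1,\mathcal{C}(s_1),a_2,\dots$ by contracting every finite maximal consecutive subsequence of the form $C,\tau,C,\tau,\dots,\tau,C$ and every infinite maximal consecutive subsequence $C,\tau,C,\tau,\dots$ to $C$. The sequences $\mathcal{C}(\pi)$ with $\pi$ a path from $s$ are the $\mathcal{C}$-coloured traces of $s$; $\mathcal{C}(\pi)$ is a divergent $\mathcal{C}$-coloured trace of $s$ if $\pi$ is an infinite path from $s$ and $\mathcal{C}(\pi)$ is finite. A colouring is consistent if any two states of the same colour have the same $\mathcal{C}$-coloured traces, and a consistent colouring preserves divergence if any two states of the same colour have the same divergent $\mathcal{C}$-coloured traces. $s\leftrightarrow_b^{\Delta}t$ (branching bisimulation equivalence with explicit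 divergence) iff there is a consistent, divergence preserving colouring $\mathcal{C}$ with $\mathcal{C}(s)=\mathcal{C}(t)$. A binary operation $\|$ on $S$ is a merge if for all $s,t,u\in S$ and $a\in\mathrm{Act}$: $s\|t\xrightarrow{a}u$ iff either there is $s'$ with $s\xrightarrow{a}s'$ and $u=s'\|t$, or there is $t'$ with $t\xrightarrow{a}t'$ and $u=s\|t'$. *)

theory Defs
  imports Main "HOL-Library.Infinite_Set"
begin

datatype ('a, 'c) ctrace = FinT 'c "('a \<times> 'c) list" | InfT 'c "nat \<Rightarrow> ('a \<times> 'c)"

(* A finite path from s0 is given by its list of steps (a_k, s_k), k = 1..n. *)
definition fin_path :: "('s \<Rightarrow> 'a \<Rightarrow> 's \<Rightarrow> bool) \<Rightarrow> 's \<Rightarrow> ('a \<times> 's) list \<Rightarrow> bool" where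
  "fin_path tr s0 xs \<longleftrightarrow>
     (\<forall>i < length xs. tr ((s0 # map snd xs) ! i) (fst (xs ! i)) (snd (xs ! i)))"

definition inf_state :: "'s \<Rightarrow> (nat \<Rightarrow> 'a \<times> 's) \<Rightarrow> nat \<Rightarrow> 's" where
  "inf_state s0 f i = (if i = 0 then s0 else snd (f (i - 1)))"

definition inf_path :: "('s \<Rightarrow> 'a \<Rightarrow> 's \<Rightarrow> bool) \<Rightarrow> 's \<Rightarrow> (nat \<Rightarrow> 'a \<times> 's) \<Rightarrow> bool" where
  "inf_path tr s0 f \<longleftrightarrow> (\<forall>i. tr (inf_state s0 f i) (fst (f i)) (snd (f i)))"

(* Contraction of maximal blocks C,tau,C,...,tau,C (finite or infinite) to C amounts
   exactly to deleting every step a_k, C(s_k) with a_k = tau and C(s_k) = C(s_(k-1)). *)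
definition fin_visible :: "'a \<Rightarrow> ('s \<Rightarrow> 'c) \<Rightarrow> 's \<Rightarrow> ('a \<times> 's) list \<Rightarrow> nat \<Rightarrow> bool" where
  "fin_visible tau C s0 xs i \<longleftrightarrow>
     fst (xs ! i) \<noteq> tau \<or> C (snd (xs ! i)) \<noteq> C ((s0 # map snd xs) ! i)"

definition fin_ctrace :: "'a \<Rightarrow> ('s \<Rightarrow> 'c) \<Rightarrow> 's \<Rightarrow> ('a \<times> 's) list \<Rightarrow> ('a, 'c) ctrace" where
  "fin_ctrace tau C s0 xs =
     FinT (C s0) (map (\<lambda>i. (fst (xs ! i), C (snd (xs ! i))))
                      (filter (fin_visible tau C s0 xs) [0..<length xs]))"

definition inf_visible :: "'a \<Rightarrow> ('s \<Rightarrow> 'c) \<Rightarrow> 's \<Rightarrow> (nat \<Rightarrow> 'a \<times> 's) \<Rightarrow> nat set" where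
  "inf_visible tau C s0 f = {i. fst (f i) \<noteq> tau \<or> C (snd (f i)) \<noteq> C (inf_state s0 f i)}"

definition inf_ctrace :: "'a \<Rightarrow> ('s \<Rightarrow> 'c) \<Rightarrow> 's \<Rightarrow> (nat \<Rightarrow> 'a \<times> 's) \<Rightarrow> ('a, 'c) ctrace" where
  "inf_ctrace tau C s0 f =
     (let V = inf_visible tau C s0 f; g = (\<lambda>i. (fst (f i), C (snd (f i)))) in
      if finite V then FinT (C s0) (map g (sorted_list_of_set V))
      else InfT (C s0) (\<lambda>n. g (enumerate V n)))"

definition ctraces :: "'a \<Rightarrow> ('s \<Rightarrow> 'a \<Rightarrow> 's \<Rightarrow> bool) \<Rightarrow> ('s \<Rightarrow> 'c) \<Rightarrow> 's \<Rightarrow> ('a, 'c) ctrace set" where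
  "ctraces tau tr C s =
     {fin_ctrace tau C s xs | xs. fin_path tr s xs} \<union>
     {inf_ctrace tau C s f | f. inf_path tr s f}"

definition div_ctraces :: "'a \<Rightarrow> ('s \<Rightarrow> 'a \<Rightarrow> 's \<Rightarrow> bool) \<Rightarrow> ('s \<Rightarrow> 'c) \<Rightarrow> 's \<Rightarrow> ('a, 'c) ctrace set" where
  "div_ctraces tau tr C s =
     {inf_ctrace tau C s f | f. inf_path tr s f \<and> finite (inf_visible tau C s f)}"

definition consistent :: "'a \<Rightarrow> ('s \<Rightarrow> 'a \<Rightarrow> 's \<Rightarrow> bool) \<Rightarrow> ('s \<Rightarrow> 'c) \<Rightarrow> bool" where
  "consistent tau tr C \<longleftrightarrow>
     (\<forall>s t. C s = C t \<longrightarrow> ctraces tau tr C s = ctraces tau tr C t)"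

definition div_preserving :: "'a \<Rightarrow> ('s \<Rightarrow> 'a \<Rightarrow> 's \<Rightarrow> bool) \<Rightarrow> ('s \<Rightarrow> 'c) \<Rightarrow> bool" where
  "div_preserving tau tr C \<longleftrightarrow>
     (\<forall>s t. C s = C t \<longrightarrow> div_ctraces tau tr C s = div_ctraces tau tr C t)"

(* Colours are taken in 's set: any colouring can be replaced by the one mapping
   a state to its colour class, without changing consistency/divergence preservation. *)
definition bbisim_div :: "'a \<Rightarrow> ('s \<Rightarrow> 'a \<Rightarrow> 's \<Rightarrow> bool) \<Rightarrow> 's \<Rightarrow> 's \<Rightarrow> bool" where
  "bbisim_div tau tr s t \<longleftrightarrow>
     (\<exists>C :: 's \<Rightarrow> 's set. consistent tau tr C \<and> div_preserving tau tr C \<and> C s = C t)"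

definition is_merge :: "('s \<Rightarrow> 'a \<Rightarrow> 's \<Rightarrow> bool) \<Rightarrow> ('s \<Rightarrow> 's \<Rightarrow> 's) \<Rightarrow> bool" where
  "is_merge tr mrg \<longleftrightarrow>
     (\<forall>s t u a. tr (mrg s t) a u \<longleftrightarrow>
        (\<exists>s'. tr s a s' \<and> u = mrg s' t) \<or> (\<exists>t'. tr t a t' \<and> u = mrg s t'))"

end

theory Submission
  imports Defs "HOL-Library.Sublist"
begin


primrec vis :: "'a \<Rightarrow> ('s \<Rightarrow> 'c) \<Rightarrow> 's \<Rightarrow> ('a \<times> 's) list \<Rightarrow> ('a \<times> 'c) list" where
  "vis tau C x [] = []"
| "vis tau C x (st # xs) = (if fst st \<noteq> tau \<or> C (snd st) \<noteq> C x then [(fst st, C (snd st))] else []) @ vis tau C (snd st) xs"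

lemma vis_append: "vis tau C x (xs @ ys) = vis tau C x xs @ vis tau C (last (x # map snd xs)) ys"
  by (induction xs arbitrary: x) auto

lemma fin_path_Nil[simp]: "fin_path tr x []"
  by (simp add: fin_path_def)

lemma fin_path_Cons[simp]: "fin_path tr x (st # xs) \<longleftrightarrow> tr x (fst st) (snd st) \<and> fin_path tr (snd st) xs"
  unfolding fin_path_def
  by (auto simp: nth_Cons split: nat.splits)

lemma fin_path_append: "fin_path tr x (xs @ ys) \<longleftrightarrow> fin_path tr x xs \<and> fin_path tr (last (x # map snd xs)) ys"
  by (induction xs arbitrary: x) auto

lemma fin_ctrace_vis: "fin_ctrace tau C x xs = FinT (C x) (vis tau C x xs)"
proof (induction xs arbitrary: x)
  case Nil then show ?case by (simp add: fin_ctrace_def)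
next
  case (Cons st xs)
  have fv: "fin_visible tau C x (st # xs) (Suc i) = fin_visible tau C (snd st) xs i" for i
    by (simp add: fin_visible_def)
  have "[0..<length (st # xs)] = 0 # map Suc [0..<length xs]"
    by (simp add: map_Suc_upt upt_conv_Cons del: upt_Suc)
  then have "map (\<lambda>i. (fst ((st # xs) ! i), C (snd ((st # xs) ! i)))) (filter (fin_visible tau C x (st # xs)) [0..<length (st # xs)])
     = (if fin_visible tau C x (st # xs) 0 then [(fst st, C (snd st))] else []) @
       map (\<lambda>i. (fst (xs ! i), C (snd (xs ! i)))) (filter (fin_visible tau C (snd st) xs) [0..<length xs])"
    by (simp add: filter_map o_def fv)
  moreover have "fin_visible tau C x (st # xs) 0 \<longleftrightarrow> fst st \<noteq> tau \<or> C (snd st) \<noteq> C x"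
    by (simp add: fin_visible_def)
  ultimately show ?case using Cons[of "snd st"] by (simp add: fin_ctrace_def)
qed

lemma inf_state_Suc: "inf_state x f (Suc i) = snd (f i)"
  by (simp add: inf_state_def)
lemma inf_state_0[simp]: "inf_state x f 0 = x"
  by (simp add: inf_state_def)

lemma last_map_upt: "last (x # map snd (map f [0..<n])) = inf_state x f n"
  by (induction n) (auto simp: inf_state_def)

lemma inf_path_prefix: "inf_path tr x f \<Longrightarrow> fin_path tr x (map f [0..<n])"
proof (induction n)
  case (Suc n)
  have e: "map f [0..<Suc n] = map f [0..<n] @ [f n]" by simp
  from Suc show ?case unfolding e fin_path_append last_map_upt
    by (auto simp: inf_path_def)
qed simp

definition gl :: "('s \<Rightarrow> 'c) \<Rightarrow> (nat \<Rightarrow> 'a \<times> 's) \<Rightarrow> nat \<Rightarrow> 'a \<times> 'c" where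
  "gl C f i = (fst (f i), C (snd (f i)))"

lemma vis_prefix: "vis tau C x (map f [0..<n]) = map (gl C f) (filter (\<lambda>i. i \<in> inf_visible tau C x f) [0..<n])"
proof (induction n)
  case (Suc n)
  have e: "map f [0..<Suc n] = map f [0..<n] @ [f n]" by simp
  from Suc show ?case unfolding e vis_append last_map_upt
    by (auto simp: inf_visible_def gl_def)
qed simp



definition pref where "pref tau C x f n = vis tau C x (map f [0..<n])"

lemma pref_eq: "pref tau C x f n = map (gl C f) (filter (\<lambda>i. i \<in> inf_visible tau C x f) [0..<n])"
  by (simp add: pref_def vis_prefix)

lemma pref_mono: "n \<le> m \<Longrightarrow> prefix (pref tau C x f n) (pref tau C x f m)"
proof -
  assume "n \<le> m"
  then have "[0..<m] = [0..<n] @ [n..<m]"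
    using upt_add_eq_append[of 0 n "m - n"] by simp
  then show ?thesis unfolding pref_eq by simp
qed

lemma filter_upt_sorted:
  assumes "finite V" "V \<subseteq> {..<n}"
  shows "filter (\<lambda>i. i \<in> V) [0..<n] = sorted_list_of_set V"
  apply (rule sorted_distinct_set_unique)
  using assms by (auto simp: sorted_wrt_filter)

lemma pref_fin:
  assumes "finite (inf_visible tau C x f)"
  shows "\<exists>B. \<forall>n\<ge>B. pref tau C x f n = map (gl C f) (sorted_list_of_set (inf_visible tau C x f))"
proof -
  let ?V = "inf_visible tau C x f"
  obtain B where B: "?V \<subseteq> {..<B}"
    using assms finite_nat_bounded by blast
  show ?thesis
  proof (rule exI[of _ B], intro allI impI)
    fix n assume "B \<le> n"
    then have "?V \<subseteq> {..<n}" using B by auto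
    then show "pref tau C x f n = map (gl C f) (sorted_list_of_set ?V)"
      using assms by (simp add: pref_eq filter_upt_sorted)
  qed
qed

lemma length_pref_fin:
  assumes "finite (inf_visible tau C x f)"
  shows "length (pref tau C x f n) \<le> card (inf_visible tau C x f)"
proof -
  let ?V = "inf_visible tau C x f"
  have "length (filter (\<lambda>i. i \<in> ?V) [0..<n]) = card (set (filter (\<lambda>i. i \<in> ?V) [0..<n]))"
    by (metis distinct_card distinct_filter distinct_upt)
  also have "\<dots> \<le> card ?V"
    by (rule card_mono[OF assms]) auto
  finally show ?thesis by (simp add: pref_eq)
qed

lemma filter_enum:
  assumes "infinite V"
  shows "filter (\<lambda>i. i \<in> V) [0..<Suc (enumerate V k)] = map (enumerate V) [0..<Suc k]"
proof (induction k)
  case 0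
  have "filter (\<lambda>i. i \<in> V) [0..<enumerate V 0] = []"
  proof -
    have "i \<notin> V" if "i < enumerate V 0" for i
    proof
      assume "i \<in> V"
      then obtain j where "enumerate V j = i" using enumerate_Ex[OF assms] by blast
      then show False using that assms by (metis enumerate_mono_le_iff le0 leD)
    qed
    then show ?thesis by (auto simp: filter_empty_conv)
  qed
  then show ?case using enumerate_in_set[OF assms] by simp
next
  case (Suc k)
  let ?e = "enumerate V"
  have lt: "?e k < ?e (Suc k)" using enumerate_step[OF assms] .
  have "[0..<Suc (?e (Suc k))] = [0..<Suc (?e k)] @ [Suc (?e k)..<?e (Suc k)] @ [?e (Suc k)]"
  proof -
    have "[0..<Suc (?e (Suc k))] = [0..<?e (Suc k)] @ [?e (Suc k)]" by simp
    moreover have "[0..<?e (Suc k)] = [0..<Suc (?e k)] @ [Suc (?e k)..<?e (Suc k)]"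
      using upt_add_eq_append[of 0 "Suc (?e k)" "?e (Suc k) - Suc (?e k)"] lt by simp
    ultimately show ?thesis by simp
  qed
  moreover have "filter (\<lambda>i. i \<in> V) [Suc (?e k)..<?e (Suc k)] = []"
  proof -
    have "i \<notin> V" if "?e k < i" "i < ?e (Suc k)" for i
    proof
      assume "i \<in> V"
      then obtain j where j: "?e j = i" using enumerate_Ex[OF assms] by blast
      then have "k < j" using that(1) assms by (metis enumerate_mono_iff)
      moreover have "j < Suc k" using that(2) j assms by (metis enumerate_mono_iff)
      ultimately show False by simp
    qed
    then show ?thesis by (auto simp: filter_empty_conv)
  qed
  ultimately show ?case using Suc enumerate_in_set[OF assms] by simp
qed

lemma pref_enum:
  assumes "infinite (inf_visible tau C x f)"
  shows "pref tau C x f (Suc (enumerate (inf_visible tau C x f) k)) = map (gl C f \<circ> enumerate (inf_visible tau C x f)) [0..<Suc k]"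
  by (simp add: pref_eq filter_enum[OF assms] del: upt_Suc)

lemma prefix_nth: "prefix a z \<Longrightarrow> prefix b z \<Longrightarrow> k < length a \<Longrightarrow> k < length b \<Longrightarrow> a ! k = b ! k"
  by (metis nth_append prefix_def)

lemma PC_fin:
  assumes "\<forall>n. \<exists>m. prefix (pref tau C x f n) (pref tau C y g m)"
    and "finite (inf_visible tau C y g)"
  shows "finite (inf_visible tau C x f)"
proof (rule ccontr)
  let ?V = "inf_visible tau C x f"
  assume inf: "infinite ?V"
  define k where "k = card (inf_visible tau C y g)"
  obtain m where "prefix (pref tau C x f (Suc (enumerate ?V k))) (pref tau C y g m)"
    using assms(1) by blast
  then have "length (pref tau C x f (Suc (enumerate ?V k))) \<le> k"
    using length_pref_fin[OF assms(2), of m] prefix_length_le unfolding k_def by fastforce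
  then show False using pref_enum[OF inf, of k] by simp
qed

lemma PC:
  assumes "C x = C y"
    and 1: "\<forall>n. \<exists>m. prefix (pref tau C x f n) (pref tau C y g m)"
    and 2: "\<forall>m. \<exists>n. prefix (pref tau C y g m) (pref tau C x f n)"
  shows "inf_ctrace tau C x f = inf_ctrace tau C y g"
proof -
  let ?Vf = "inf_visible tau C x f" and ?Vg = "inf_visible tau C y g"
  have eqfin: "finite ?Vf \<longleftrightarrow> finite ?Vg"
    using PC_fin[OF 1] PC_fin[OF 2] by blast
  show ?thesis
  proof (cases "finite ?Vf")
    case True
    then have Tg: "finite ?Vg" using eqfin by simp
    obtain Bf where Bf: "\<forall>n\<ge>Bf. pref tau C x f n = map (gl C f) (sorted_list_of_set ?Vf)"
      using pref_fin[OF True] by blast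
    obtain Bg where Bg: "\<forall>n\<ge>Bg. pref tau C y g n = map (gl C g) (sorted_list_of_set ?Vg)"
      using pref_fin[OF Tg] by blast
    have pf: "prefix (pref tau C x f n) (map (gl C f) (sorted_list_of_set ?Vf))" for n
      using pref_mono[of n "max n Bf"] Bf by (metis max.cobounded1 max.cobounded2)
    have pg: "prefix (pref tau C y g n) (map (gl C g) (sorted_list_of_set ?Vg))" for n
      using pref_mono[of n "max n Bg"] Bg by (metis max.cobounded1 max.cobounded2)
    obtain m where "prefix (pref tau C x f Bf) (pref tau C y g m)" using 1 by blast
    then have a: "prefix (map (gl C f) (sorted_list_of_set ?Vf)) (map (gl C g) (sorted_list_of_set ?Vg))"
      using Bf pg by (metis order.refl prefix_order.trans)
    obtain n where "prefix (pref tau C y g Bg) (pref tau C x f n)" using 2 by blast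
    then have b: "prefix (map (gl C g) (sorted_list_of_set ?Vg)) (map (gl C f) (sorted_list_of_set ?Vf))"
      using Bg pf by (metis order.refl prefix_order.trans)
    from a b have "map (gl C f) (sorted_list_of_set ?Vf) = map (gl C g) (sorted_list_of_set ?Vg)"
      by (rule prefix_order.antisym)
    then show ?thesis using True Tg assms(1)
      by (simp add: inf_ctrace_def Let_def gl_def[symmetric])
  next
    case False
    then have Fg: "infinite ?Vg" using eqfin by simp
    have "gl C f (enumerate ?Vf k) = gl C g (enumerate ?Vg k)" for k
    proof -
      let ?a = "pref tau C x f (Suc (enumerate ?Vf k))" and ?b = "pref tau C y g (Suc (enumerate ?Vg k))"
      obtain m where m: "prefix ?a (pref tau C y g m)" using 1 by blast
      let ?z = "pref tau C y g (max m (Suc (enumerate ?Vg k)))"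
      have "prefix ?a ?z" using m pref_mono[of m] by (meson max.cobounded1 prefix_order.trans)
      moreover have "prefix ?b ?z" using pref_mono by (metis max.cobounded2)
      moreover have "?a ! k = gl C f (enumerate ?Vf k)" using pref_enum[OF False, of k]
        by (simp del: upt_Suc)
      moreover have "?b ! k = gl C g (enumerate ?Vg k)" using pref_enum[OF Fg, of k]
        by (simp del: upt_Suc)
      moreover have "k < length ?a" "k < length ?b"
        using pref_enum[OF False, of k] pref_enum[OF Fg, of k] by simp_all
      ultimately show ?thesis using prefix_nth by metis
    qed
    then show ?thesis using False Fg assms(1)
      by (simp add: inf_ctrace_def Let_def gl_def[symmetric])
  qed
qed



lemma chain_prefix: "(\<forall>n. prefix (ys n) (ys (Suc n))) \<Longrightarrow> m \<le> n \<Longrightarrow> prefix (ys m) (ys n)"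
proof (induction n)
  case (Suc n) then show ?case
    by (metis le_Suc_eq prefix_order.order_refl prefix_order.order_trans)
qed simp

lemma G:
  assumes mono: "\<forall>n. prefix (ys n) (ys (Suc n))"
    and unb: "\<forall>k. \<exists>n. k < length (ys n)"
    and path: "\<forall>n. fin_path tr y (ys n)"
  shows "\<exists>g. inf_path tr y g \<and> (\<forall>n. map g [0..<length (ys n)] = ys n)"
proof -
  define g where "g k = ys (LEAST n. k < length (ys n)) ! k" for k
  have gk: "g k = ys n ! k" if "k < length (ys n)" for k n
  proof -
    let ?m = "LEAST n. k < length (ys n)"
    have m1: "k < length (ys ?m)" using unb by (meson LeastI_ex)
    have "?m \<le> n" using that by (rule Least_le)
    then have "prefix (ys ?m) (ys n)" using chain_prefix[OF mono] by blast
    then show ?thesis unfolding g_def using prefix_nth[of "ys ?m" "ys n" "ys n" k] m1 that by simp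
  qed
  have mp: "map g [0..<length (ys n)] = ys n" for n
    by (rule nth_equalityI) (auto simp: gk)
  have "inf_path tr y g"
    unfolding inf_path_def
  proof
    fix i
    obtain n where n: "i < length (ys n)" using unb by blast
    have "tr ((y # map snd (ys n)) ! i) (fst (ys n ! i)) (snd (ys n ! i))"
      using path n by (simp add: fin_path_def)
    moreover have "inf_state y g i = (y # map snd (ys n)) ! i"
      using n by (cases i) (auto simp: inf_state_def intro!: arg_cong[where f=snd] gk)
    ultimately show "tr (inf_state y g i) (fst (g i)) (snd (g i))" using gk[OF n] by simp
  qed
  then show ?thesis using mp by blast
qed

lemma vis_inv:
  "(\<forall>p\<in>set ys. fst p = tau \<and> D (snd p) = D y0) \<Longrightarrow> vis tau D y0 ys = [] \<and> D (last (y0 # map snd ys)) = D y0"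
  by (induction ys arbitrary: y0) auto

definition MT where
  "MT tau tr D st dstep R dx dy a x' dx' dy' seg \<longleftrightarrow>
     st dx' = x' \<and> dstep dx a dx' \<and> R dx' dy' \<and> fin_path tr (st dy) seg \<and>
     last (st dy # map snd seg) = st dy' \<and>
     ((a = tau \<and> dy' = dy \<and> seg = []) \<or>
      (\<exists>ys. seg = ys @ [(a, st dy')] \<and> (\<forall>p\<in>set ys. fst p = tau \<and> D (snd p) = D (st dy))))"

locale msim =
  fixes tau :: 'a and tr :: "'s \<Rightarrow> 'a \<Rightarrow> 's \<Rightarrow> bool" and D :: "'s \<Rightarrow> 'c"
    and st :: "'d \<Rightarrow> 's" and dstep :: "'d \<Rightarrow> 'a \<Rightarrow> 'd \<Rightarrow> bool" and R :: "'d \<Rightarrow> 'd \<Rightarrow> bool"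
  assumes H0: "\<And>dx dy. R dx dy \<Longrightarrow> D (st dx) = D (st dy)"
    and HT: "\<And>dx dy a x'. R dx dy \<Longrightarrow> tr (st dx) a x' \<Longrightarrow> \<exists>dx' dy' seg. MT tau tr D st dstep R dx dy a x' dx' dy' seg"
    and HD: "\<And>h dy. (\<forall>i. dstep (h i) tau (h (Suc i)) \<and> R (h i) dy) \<Longrightarrow>
        \<exists>f. inf_path tr (st dy) f \<and> (\<forall>i. fst (f i) = tau \<and> D (snd (f i)) = D (st dy))"
begin

lemma step_vis:
  assumes "R dx dy" "MT tau tr D st dstep R dx dy a x' dx' dy' seg"
  shows "vis tau D (st dx) [(a, x')] = vis tau D (st dy) seg"
proof -
  have e1: "D (st dx) = D (st dy)" using H0 assms(1) .
  have e2: "D x' = D (st dy')" using assms(2) H0 unfolding MT_def by metis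
  from assms(2) consider "a = tau" "dy' = dy" "seg = []"
    | ys where "seg = ys @ [(a, st dy')]" "\<forall>p\<in>set ys. fst p = tau \<and> D (snd p) = D (st dy)"
    unfolding MT_def by blast
  then show ?thesis
  proof cases
    case 1 then show ?thesis using e1 e2 by simp
  next
    case (2 ys)
    then show ?thesis using vis_inv[OF 2(2)] e1 e2 by (simp add: vis_append)
  qed
qed

lemma fin_match:
  "R dx dy \<Longrightarrow> fin_path tr (st dx) xs \<Longrightarrow> \<exists>ys. fin_path tr (st dy) ys \<and> vis tau D (st dy) ys = vis tau D (st dx) xs"
proof (induction xs arbitrary: dx dy)
  case Nil then show ?case by (intro exI[of _ "[]"]) simp
next
  case (Cons p xs)
  obtain a x1 where p: "p = (a, x1)" by (cases p)
  have tr1: "tr (st dx) a x1" and fp: "fin_path tr x1 xs" using Cons.prems p by auto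
  obtain dx' dy' seg where mt: "MT tau tr D st dstep R dx dy a x1 dx' dy' seg"
    using HT[OF Cons.prems(1) tr1] by blast
  then have "R dx' dy'" "st dx' = x1" and fs: "fin_path tr (st dy) seg" and ls: "last (st dy # map snd seg) = st dy'"
    unfolding MT_def by auto
  then obtain ys' where ys': "fin_path tr (st dy') ys'" "vis tau D (st dy') ys' = vis tau D x1 xs"
    using Cons.IH fp by metis
  have "vis tau D (st dx) (p # xs) = vis tau D (st dx) [(a, x1)] @ vis tau D x1 xs"
    using vis_append[of tau D "st dx" "[(a,x1)]" xs] p by simp
  also have "\<dots> = vis tau D (st dy) (seg @ ys')"
    using step_vis[OF Cons.prems(1) mt] ys'(2) ls by (simp add: vis_append)
  finally show ?case using fs ys'(1) ls by (intro exI[of _ "seg @ ys'"]) (simp add: fin_path_append)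
qed

end


lemma bounded_max:
  fixes h :: "nat \<Rightarrow> nat"
  assumes "\<forall>n. h n \<le> K"
  shows "\<exists>N. \<forall>n. h n \<le> h N"
proof -
  obtain x where x: "\<exists>n. h n = x" "\<forall>y. (\<exists>n. h n = y) \<longrightarrow> y \<le> x"
    using Nat.ex_has_greatest_nat[where P="\<lambda>v. \<exists>n. h n = v" and k="h 0" and b=K] assms by blast
  then show ?thesis by blast
qed

context msim begin

definition nxt :: "(nat \<Rightarrow> 'a \<times> 's) \<Rightarrow> nat \<Rightarrow> 'd \<times> 'd \<times> ('a \<times> 's) list \<Rightarrow> 'd \<times> 'd \<times> ('a \<times> 's) list" where
  "nxt f n m = (SOME t. MT tau tr D st dstep R (fst m) (fst (snd m)) (fst (f n)) (snd (f n)) (fst t) (fst (snd t)) (snd (snd t)))"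

lemma last_app: "last (x # map snd (xs @ ys)) = last (last (x # map snd xs) # map snd ys)"
  by (induction xs arbitrary: x) auto

lemma nxt_spec:
  assumes "R (fst m) (fst (snd m))" "tr (st (fst m)) (fst (f n)) (snd (f n))"
  shows "MT tau tr D st dstep R (fst m) (fst (snd m)) (fst (f n)) (snd (f n))
           (fst (nxt f n m)) (fst (snd (nxt f n m))) (snd (snd (nxt f n m)))"
proof -
  let ?P = "\<lambda>dx' dy' seg. MT tau tr D st dstep R (fst m) (fst (snd m)) (fst (f n)) (snd (f n)) dx' dy' seg"
  obtain a b c where "?P a b c" using HT[OF assms] by blast
  then have "\<exists>t. ?P (fst t) (fst (snd t)) (snd (snd t))" by (intro exI[of _ "(a,b,c)"]) simp
  then have "?P (fst (SOME t. ?P (fst t) (fst (snd t)) (snd (snd t)))) (fst (snd (SOME t. ?P (fst t) (fst (snd t)) (snd (snd t))))) (snd (snd (SOME t. ?P (fst t) (fst (snd t)) (snd (snd t)))))"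
    by (rule someI_ex)
  then show ?thesis unfolding nxt_def .
qed

primrec Mseq :: "'d \<Rightarrow> 'd \<Rightarrow> (nat \<Rightarrow> 'a \<times> 's) \<Rightarrow> nat \<Rightarrow> 'd \<times> 'd \<times> ('a \<times> 's) list" where
  "Mseq dx dy f 0 = (dx, dy, [])"
| "Mseq dx dy f (Suc n) = nxt f n (Mseq dx dy f n)"

lemma inf_match:
  assumes R0: "R dx dy" and fp: "inf_path tr (st dx) f"
  shows "\<exists>g. inf_path tr (st dy) g \<and> inf_ctrace tau D (st dy) g = inf_ctrace tau D (st dx) f"
proof -
  let ?M = "Mseq dx dy f"
  define X where "X n = fst (?M n)" for n
  define Y where "Y n = fst (snd (?M n))" for n
  define S where "S n = snd (snd (?M (Suc n)))" for n
  have inv: "R (X n) (Y n) \<and> st (X n) = inf_state (st dx) f n" for n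
  proof (induction n)
    case 0 then show ?case using R0 by (simp add: X_def Y_def)
  next
    case (Suc n)
    have "tr (st (X n)) (fst (f n)) (snd (f n))" using fp Suc by (simp add: inf_path_def)
    then have "MT tau tr D st dstep R (X n) (Y n) (fst (f n)) (snd (f n)) (X (Suc n)) (Y (Suc n)) (S n)"
      unfolding X_def Y_def S_def Mseq.simps using Suc nxt_spec unfolding X_def Y_def by blast
    then show ?case unfolding MT_def by (auto simp: inf_state_Suc)
  qed
  have mt: "MT tau tr D st dstep R (X n) (Y n) (fst (f n)) (snd (f n)) (X (Suc n)) (Y (Suc n)) (S n)" for n
  proof -
    have "tr (st (X n)) (fst (f n)) (snd (f n))" using fp inv by (simp add: inf_path_def)
    then show ?thesis
      unfolding X_def Y_def S_def Mseq.simps using inv[of n] nxt_spec unfolding X_def Y_def by blast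
  qed
  define Ys where "Ys n = concat (map S [0..<n])" for n
  have YsS: "Ys (Suc n) = Ys n @ S n" for n by (simp add: Ys_def)
  have Ysinv: "fin_path tr (st dy) (Ys n) \<and> last (st dy # map snd (Ys n)) = st (Y n) \<and>
       vis tau D (st dy) (Ys n) = pref tau D (st dx) f n" for n
  proof (induction n)
    case 0 then show ?case by (simp add: Ys_def Y_def pref_def)
  next
    case (Suc n)
    have sv: "vis tau D (st (X n)) [f n] = vis tau D (st (Y n)) (S n)"
      using step_vis[OF _ mt[of n]] inv[of n] by (metis prod.collapse)
    have pe: "pref tau D (st dx) f (Suc n) = pref tau D (st dx) f n @ vis tau D (inf_state (st dx) f n) [f n]"
    proof -
      have e: "map f [0..<Suc n] = map f [0..<n] @ [f n]" by simp
      show ?thesis unfolding pref_def e vis_append last_map_upt ..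
    qed
    from mt[of n] have "fin_path tr (st (Y n)) (S n)" "last (st (Y n) # map snd (S n)) = st (Y (Suc n))"
      unfolding MT_def by auto
    note h = this
    have l: "last (st dy # map snd (Ys (Suc n))) = st (Y (Suc n))"
    proof -
      have "last (st dy # map snd (Ys (Suc n))) = last (last (st dy # map snd (Ys n)) # map snd (S n))"
        by (simp only: YsS last_app)
      also have "\<dots> = last (st (Y n) # map snd (S n))" using Suc by simp
      finally show ?thesis using h(2) by simp
    qed
    have "fin_path tr (st dy) (Ys (Suc n))"
      unfolding YsS fin_path_append using Suc h(1) by simp
    moreover have "vis tau D (st dy) (Ys (Suc n)) = pref tau D (st dx) f (Suc n)"
      unfolding YsS vis_append using Suc sv pe inv[of n] by simp
    ultimately show ?case using l by simp
  qed
  have chain: "\<forall>n. prefix (Ys n) (Ys (Suc n))" by (simp add: YsS)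
  have Dxy: "D (st dy) = D (st dx)" using H0[OF R0] by simp
  show ?thesis
  proof (cases "\<forall>k. \<exists>n. k < length (Ys n)")
    case True
    obtain g where g: "inf_path tr (st dy) g" "\<forall>n. map g [0..<length (Ys n)] = Ys n"
      using G[OF chain True] Ysinv by blast
    have pg: "pref tau D (st dy) g (length (Ys n)) = pref tau D (st dx) f n" for n
      using g(2) Ysinv by (simp add: pref_def)
    have "inf_ctrace tau D (st dy) g = inf_ctrace tau D (st dx) f"
    proof (rule PC[where C=D and x="st dy" and y="st dx", OF Dxy])
      show "\<forall>n. \<exists>m. prefix (pref tau D (st dy) g n) (pref tau D (st dx) f m)"
      proof
        fix n
        obtain m where "n < length (Ys m)" using True by blast
        then show "\<exists>m. prefix (pref tau D (st dy) g n) (pref tau D (st dx) f m)"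
          using pref_mono[of n "length (Ys m)"] pg by (metis less_imp_le)
      qed
      show "\<forall>n. \<exists>m. prefix (pref tau D (st dx) f n) (pref tau D (st dy) g m)"
        using pg by (metis prefix_order.refl)
    qed
    then show ?thesis using g by blast
  next
    case False
    then obtain K where K: "\<forall>n. length (Ys n) \<le> K" by (meson not_le)
    have lmono: "length (Ys m) \<le> length (Ys n)" if mn: "m \<le> n" for m n
    proof -
      have "prefix (Ys m) (Ys n)" using chain_prefix[of Ys, OF chain mn] .
      then show ?thesis by (rule prefix_length_le)
    qed
    obtain N where le: "length (Ys n) \<le> length (Ys N)" for n
      using bounded_max[of "\<lambda>n. length (Ys n)" K] K by blast
    have Sn: "S n = []" if "N \<le> n" for n
    proof -
      have "length (Ys n) + length (S n) \<le> length (Ys N)" using le[of "Suc n"] by (simp add: YsS)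
      then have "length (S n) = 0" using lmono[OF that] by linarith
      then show ?thesis by simp
    qed
    have YsN: "Ys n = Ys N" if "N \<le> n" for n
      using that proof (induction n rule: dec_induct)
      case (step n) then show ?case by (simp add: YsS Sn)
    qed simp
    have st1: "Y (Suc n) = Y n \<and> dstep (X n) tau (X (Suc n))" if "N \<le> n" for n
      using mt[of n] Sn[OF that] unfolding MT_def by auto
    have stay: "Y (N + i) = Y N \<and> dstep (X (N + i)) tau (X (Suc (N + i)))" for i
    proof (induction i)
      case 0 show ?case using st1[of N] by simp
    next
      case (Suc i) then show ?case using st1[of "N + i"] st1[of "Suc (N + i)"] by simp
    qed
    have "\<forall>i. dstep (X (N + i)) tau (X (N + Suc i)) \<and> R (X (N + i)) (Y N)"
    proof
      fix i
      have "R (X (N + i)) (Y (N + i))" using inv by blast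
      then show "dstep (X (N + i)) tau (X (N + Suc i)) \<and> R (X (N + i)) (Y N)"
        using stay[of i] by simp
    qed
    then obtain t where t: "inf_path tr (st (Y N)) t" "\<forall>i. fst (t i) = tau \<and> D (snd (t i)) = D (st (Y N))"
      using HD[of "\<lambda>i. X (N + i)" "Y N"] by blast
    define ys where "ys n = Ys N @ map t [0..<n]" for n
    have c2: "\<forall>n. prefix (ys n) (ys (Suc n))" by (simp add: ys_def)
    have u2: "\<forall>k. \<exists>n. k < length (ys n)" proof
      fix k show "\<exists>n. k < length (ys n)" by (rule exI[of _ "Suc k"]) (simp add: ys_def)
    qed
    have p2: "\<forall>n. fin_path tr (st dy) (ys n)"
      using Ysinv inf_path_prefix[OF t(1)] by (simp add: ys_def fin_path_append)
    obtain g where g: "inf_path tr (st dy) g" "\<forall>n. map g [0..<length (ys n)] = ys n"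
      using G[OF c2 u2 p2] by blast
    have tinv: "vis tau D (st (Y N)) (map t [0..<n]) = []" for n
      using vis_inv[of "map t [0..<n]" tau D "st (Y N)"] t(2) by auto
    have pg: "pref tau D (st dy) g (length (Ys N) + n) = pref tau D (st dx) f N" for n
    proof -
      have "map g [0..<length (Ys N) + n] = ys n" using g(2)[rule_format, of n] by (simp add: ys_def)
      then show ?thesis using Ysinv[of N] tinv by (simp add: pref_def ys_def vis_append)
    qed
    have pf: "pref tau D (st dx) f n = pref tau D (st dx) f N" if "N \<le> n" for n
      using Ysinv[of n] Ysinv[of N] YsN[OF that] by simp
    have "inf_ctrace tau D (st dy) g = inf_ctrace tau D (st dx) f"
    proof (rule PC[where C=D and x="st dy" and y="st dx", OF Dxy])
      show "\<forall>n. \<exists>m. prefix (pref tau D (st dy) g n) (pref tau D (st dx) f m)"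
      proof
        fix n
        have "prefix (pref tau D (st dy) g n) (pref tau D (st dy) g (length (Ys N) + n))"
          by (rule pref_mono) simp
        then show "\<exists>m. prefix (pref tau D (st dy) g n) (pref tau D (st dx) f m)"
          using pg by auto
      qed
      show "\<forall>n. \<exists>m. prefix (pref tau D (st dx) f n) (pref tau D (st dy) g m)"
      proof
        fix n
        have "prefix (pref tau D (st dx) f n) (pref tau D (st dx) f (max n N))" by (rule pref_mono) simp
        then show "\<exists>m. prefix (pref tau D (st dx) f n) (pref tau D (st dy) g m)"
          using pf[of "max n N"] pg[of 0] by (intro exI[of _ "length (Ys N)"]) simp
      qed
    qed
    then show ?thesis using g by blast
  qed
qed

lemma match_ctraces:
  assumes "R dx dy"
  shows "ctraces tau tr D (st dx) \<subseteq> ctraces tau tr D (st dy)"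
    and "div_ctraces tau tr D (st dx) \<subseteq> div_ctraces tau tr D (st dy)"
proof -
  have Dxy: "D (st dx) = D (st dy)" using H0[OF assms] .
  show "ctraces tau tr D (st dx) \<subseteq> ctraces tau tr D (st dy)"
  proof
    fix c assume "c \<in> ctraces tau tr D (st dx)"
    then consider xs where "fin_path tr (st dx) xs" "c = fin_ctrace tau D (st dx) xs"
      | f where "inf_path tr (st dx) f" "c = inf_ctrace tau D (st dx) f"
      unfolding ctraces_def by blast
    then show "c \<in> ctraces tau tr D (st dy)"
    proof cases
      case 1
      then obtain ys where "fin_path tr (st dy) ys" "vis tau D (st dy) ys = vis tau D (st dx) xs"
        using fin_match[OF assms] by blast
      then show ?thesis using 1 Dxy unfolding ctraces_def by (auto simp: fin_ctrace_vis)
    next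
      case 2
      then show ?thesis using inf_match[OF assms 2(1)] unfolding ctraces_def by auto
    qed
  qed
  show "div_ctraces tau tr D (st dx) \<subseteq> div_ctraces tau tr D (st dy)"
  proof
    fix c assume "c \<in> div_ctraces tau tr D (st dx)"
    then obtain f where f: "inf_path tr (st dx) f" "finite (inf_visible tau D (st dx) f)" "c = inf_ctrace tau D (st dx) f"
      unfolding div_ctraces_def by blast
    then obtain g where g: "inf_path tr (st dy) g" "inf_ctrace tau D (st dy) g = c"
      using inf_match[OF assms f(1)] by auto
    have "finite (inf_visible tau D (st dy) g)"
    proof (rule ccontr)
      assume "infinite (inf_visible tau D (st dy) g)"
      then have "\<exists>c0 h. inf_ctrace tau D (st dy) g = InfT c0 h" by (simp add: inf_ctrace_def Let_def)
      moreover have "\<exists>c0 l. inf_ctrace tau D (st dx) f = FinT c0 l" using f(2) by (simp add: inf_ctrace_def Let_def)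
      ultimately show False using g f(3) by auto
    qed
    then show "c \<in> div_ctraces tau tr D (st dy)" using g unfolding div_ctraces_def by auto
  qed
qed

end


lemma vis_single: "vis tau C y zs = [(a, c)] \<Longrightarrow>
  \<exists>ys z rest. zs = ys @ (a, z) # rest \<and> (\<forall>q\<in>set ys. fst q = tau \<and> C (snd q) = C y) \<and> C z = c"
proof (induction zs arbitrary: y)
  case Nil then show ?case by simp
next
  case (Cons p zs)
  show ?case
  proof (cases "fst p \<noteq> tau \<or> C (snd p) \<noteq> C y")
    case True
    then have "fst p = a" "C (snd p) = c" using Cons.prems by auto
    then show ?thesis by (intro exI[of _ "[]"] exI[of _ "snd p"] exI[of _ zs]) auto
  next
    case False
    then have "vis tau C (snd p) zs = [(a, c)]" using Cons.prems by simp
    then obtain ys z rest where "zs = ys @ (a, z) # rest" "\<forall>q\<in>set ys. fst q = tau \<and> C (snd q) = C (snd p)" "C z = c"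
      using Cons.IH by blast
    then show ?thesis using False by (intro exI[of _ "p # ys"] exI[of _ z] exI[of _ rest]) auto
  qed
qed

lemma CT:
  assumes cons: "consistent tau tr C" and eq: "C p = C p'" and step: "tr p a p1"
  shows "(a = tau \<and> C p1 = C p) \<or>
    (\<exists>ys z. fin_path tr p' (ys @ [(a, z)]) \<and> (\<forall>q\<in>set ys. fst q = tau \<and> C (snd q) = C p') \<and> C z = C p1)"
proof (cases "a = tau \<and> C p1 = C p")
  case True then show ?thesis by simp
next
  case False
  have "fin_path tr p [(a, p1)]" using step by simp
  then have "fin_ctrace tau C p [(a, p1)] \<in> ctraces tau tr C p"
    unfolding ctraces_def by blast
  moreover have "ctraces tau tr C p = ctraces tau tr C p'"
    using cons eq unfolding consistent_def by blast
  ultimately have "fin_ctrace tau C p [(a, p1)] \<in> ctraces tau tr C p'" by simp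
  moreover have ft: "fin_ctrace tau C p [(a, p1)] = FinT (C p') [(a, C p1)]"
    using False eq by (auto simp: fin_ctrace_vis)
  ultimately have "\<exists>zs. fin_path tr p' zs \<and> vis tau C p' zs = [(a, C p1)]"
  proof (unfold ctraces_def, safe)
    fix xs assume "fin_ctrace tau C p [(a, p1)] = fin_ctrace tau C p' xs" "fin_path tr p' xs"
    then have "FinT (C p') [(a, C p1)] = fin_ctrace tau C p' xs" using ft by simp
    then have "vis tau C p' xs = [(a, C p1)]" by (simp add: fin_ctrace_vis)
    then show ?thesis using \<open>fin_path tr p' xs\<close> by blast
  next
    fix f assume h: "fin_ctrace tau C p [(a, p1)] = inf_ctrace tau C p' f" "inf_path tr p' f"
    have fin: "finite (inf_visible tau C p' f)"
    proof (rule ccontr)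
      assume "infinite (inf_visible tau C p' f)"
      then show False using h(1) ft by (simp add: inf_ctrace_def Let_def)
    qed
    then have "map (gl C f) (sorted_list_of_set (inf_visible tau C p' f)) = [(a, C p1)]"
      using h(1) ft by (simp add: inf_ctrace_def Let_def gl_def[symmetric])
    moreover obtain B where "\<forall>n\<ge>B. pref tau C p' f n = map (gl C f) (sorted_list_of_set (inf_visible tau C p' f))"
      using pref_fin[OF fin] by blast
    ultimately have "vis tau C p' (map f [0..<B]) = [(a, C p1)]" by (simp add: pref_def)
    then show ?thesis using inf_path_prefix[OF h(2)] by blast
  qed
  then obtain zs where zs: "fin_path tr p' zs" "vis tau C p' zs = [(a, C p1)]" by blast
  then obtain ys z rest where "zs = ys @ (a, z) # rest" "\<forall>q\<in>set ys. fst q = tau \<and> C (snd q) = C p'" "C z = C p1"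
    using vis_single[OF zs(2)] by blast
  moreover have "fin_path tr p' (ys @ [(a, z)])"
    using zs(1) calculation(1) by (simp add: fin_path_append)
  ultimately show ?thesis by blast
qed

lemma inv_state_col:
  assumes "\<forall>i. fst (g i) = tau \<and> C (snd (g i)) = C (inf_state p g i)"
  shows "C (inf_state p g i) = C p"
  using assms by (induction i) (auto simp: inf_state_Suc simp del: inf_state_def)

lemma DV:
  assumes dp: "div_preserving tau tr C" and eq: "C p = C p'" and f: "inf_path tr p f"
    and inv: "\<forall>i. fst (f i) = tau \<and> C (snd (f i)) = C p"
  shows "\<exists>g. inf_path tr p' g \<and> (\<forall>i. fst (g i) = tau \<and> C (snd (g i)) = C p')"
proof -
  have cs: "C (inf_state p f i) = C p" for i using inv by (cases i) (auto simp: inf_state_def)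
  have V: "inf_visible tau C p f = {}" using inv cs by (auto simp: inf_visible_def)
  have "inf_ctrace tau C p f \<in> div_ctraces tau tr C p" using f V unfolding div_ctraces_def by auto
  moreover have "div_ctraces tau tr C p = div_ctraces tau tr C p'"
    using dp eq unfolding div_preserving_def by blast
  ultimately have "inf_ctrace tau C p f \<in> div_ctraces tau tr C p'" by simp
  then obtain g where g: "inf_path tr p' g" "finite (inf_visible tau C p' g)" "inf_ctrace tau C p f = inf_ctrace tau C p' g"
    unfolding div_ctraces_def by blast
  then have "sorted_list_of_set (inf_visible tau C p' g) = []"
    using V by (simp add: inf_ctrace_def Let_def split: if_splits)
  then have "inf_visible tau C p' g = {}" using g(2) by simp
  then have h: "\<forall>i. fst (g i) = tau \<and> C (snd (g i)) = C (inf_state p' g i)" by (auto simp: inf_visible_def)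
  then have "\<forall>i. fst (g i) = tau \<and> C (snd (g i)) = C p'" using inv_state_col[OF h] by simp
  then show ?thesis using g(1) by blast
qed

lemma const_seg: "(\<forall>j. a \<le> j \<and> j < b \<longrightarrow> p (Suc j) = p j) \<Longrightarrow> a \<le> b \<Longrightarrow> p b = p a"
proof (induction b)
  case (Suc b) then show ?case by (cases "a \<le> b") (auto simp: le_Suc_eq)
qed simp



locale mctx =
  fixes tau :: 'a and tr :: "'s \<Rightarrow> 'a \<Rightarrow> 's \<Rightarrow> bool" and mrg :: "'s \<Rightarrow> 's \<Rightarrow> 's"
    and C1 :: "'s \<Rightarrow> 's set" and C2 :: "'s \<Rightarrow> 's set"
  assumes merge: "is_merge tr mrg"
    and c1: "consistent tau tr C1" and d1: "div_preserving tau tr C1"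
    and c2: "consistent tau tr C2" and d2: "div_preserving tau tr C2"
begin

definition Rm :: "('s \<times> 's) set" where
  "Rm = {(mrg p q, mrg p' q') | p q p' q'. C1 p = C1 p' \<and> C2 q = C2 q'}"

definition Dm :: "'s \<Rightarrow> 's set" where "Dm x = {z. (x, z) \<in> Rm\<^sup>*}"

fun Rp :: "'s \<times> 's \<Rightarrow> 's \<times> 's \<Rightarrow> bool" where
  "Rp (p, q) (p', q') \<longleftrightarrow> C1 p = C1 p' \<and> C2 q = C2 q'"

fun dst :: "'s \<times> 's \<Rightarrow> 'a \<Rightarrow> 's \<times> 's \<Rightarrow> bool" where
  "dst (p, q) a (p1, q1) \<longleftrightarrow> (tr p a p1 \<and> q1 = q) \<or> (p1 = p \<and> tr q a q1)"

lemma sym_Rm: "sym Rm"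
  unfolding Rm_def sym_def by blast

lemma Dm_eq: "(x, y) \<in> Rm\<^sup>* \<Longrightarrow> Dm x = Dm y"
proof -
  assume xy: "(x, y) \<in> Rm\<^sup>*"
  then have yx: "(y, x) \<in> Rm\<^sup>*" using sym_Rm by (meson sym_def sym_rtrancl)
  show ?thesis unfolding Dm_def using xy yx by (auto intro: rtrancl_trans)
qed

lemma Dm_eqD: "Dm x = Dm y \<Longrightarrow> (x, y) \<in> Rm\<^sup>*"
  unfolding Dm_def by blast

lemma Dm_mrg: "C1 p = C1 p' \<Longrightarrow> C2 q = C2 q' \<Longrightarrow> Dm (mrg p q) = Dm (mrg p' q')"
proof (rule Dm_eq, rule r_into_rtrancl)
  assume "C1 p = C1 p'" "C2 q = C2 q'"
  then show "(mrg p q, mrg p' q') \<in> Rm" unfolding Rm_def by blast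
qed

lemma mstep: "tr (mrg p q) a u \<longleftrightarrow> (\<exists>p'. tr p a p' \<and> u = mrg p' q) \<or> (\<exists>q'. tr q a q' \<and> u = mrg p q')"
  using merge unfolding is_merge_def by blast

lemma lift_l: "fin_path tr p xs \<Longrightarrow> fin_path tr (mrg p q) (map (\<lambda>(b, w). (b, mrg w q)) xs)"
  by (induction xs arbitrary: p) (auto simp: mstep)

lemma lift_r: "fin_path tr q xs \<Longrightarrow> fin_path tr (mrg p q) (map (\<lambda>(b, w). (b, mrg p w)) xs)"
  by (induction xs arbitrary: q) (auto simp: mstep)

lemma last_lift_l: "last (mrg p q # map snd (map (\<lambda>(b, w). (b, mrg w q)) xs)) = mrg (last (p # map snd xs)) q"
  by (induction xs arbitrary: p) auto

lemma last_lift_r: "last (mrg p q # map snd (map (\<lambda>(b, w). (b, mrg p w)) xs)) = mrg p (last (q # map snd xs))"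
  by (induction xs arbitrary: q) auto

lemma HT_m:
  assumes R: "Rp dx dy" and st: "tr (case_prod mrg dx) a x'"
  shows "\<exists>dx' dy' seg. MT tau tr Dm (case_prod mrg) dst Rp dx dy a x' dx' dy' seg"
proof -
  obtain p q p' q' where dx: "dx = (p, q)" and dy: "dy = (p', q')" by (cases dx, cases dy)
  have e1: "C1 p = C1 p'" and e2: "C2 q = C2 q'" using R dx dy by auto
  from st dx consider p1 where "tr p a p1" "x' = mrg p1 q" | q1 where "tr q a q1" "x' = mrg p q1"
    by (auto simp: mstep)
  then show ?thesis
  proof cases
    case (1 p1)
    from CT[OF c1 e1 1(1)] show ?thesis
    proof
      assume "a = tau \<and> C1 p1 = C1 p"
      then show ?thesis using 1 dx dy e1 e2
        by (intro exI[of _ "(p1, q)"] exI[of _ dy] exI[of _ "[]"]) (auto simp: MT_def)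
    next
      assume "\<exists>ys z. fin_path tr p' (ys @ [(a, z)]) \<and> (\<forall>q\<in>set ys. fst q = tau \<and> C1 (snd q) = C1 p') \<and> C1 z = C1 p1"
      then obtain ys z where yz: "fin_path tr p' (ys @ [(a, z)])" "\<forall>q\<in>set ys. fst q = tau \<and> C1 (snd q) = C1 p'" "C1 z = C1 p1"
        by blast
      let ?L = "\<lambda>xs. map (\<lambda>(b, w). (b, mrg w q')) xs"
      have fp: "fin_path tr (mrg p' q') (?L (ys @ [(a, z)]))" using lift_l[OF yz(1)] .
      have ls: "last (mrg p' q' # map snd (?L (ys @ [(a, z)]))) = mrg z q'"
        using last_lift_l[of p' q' "ys @ [(a,z)]"] by simp
      have inv: "\<forall>r\<in>set (?L ys). fst r = tau \<and> Dm (snd r) = Dm (mrg p' q')"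
      proof
        fix r assume "r \<in> set (?L ys)"
        then obtain b w where bw: "(b, w) \<in> set ys" "r = (b, mrg w q')" by auto
        then show "fst r = tau \<and> Dm (snd r) = Dm (mrg p' q')" using yz(2) Dm_mrg[of w p' q' q'] by auto
      qed
      show ?thesis using 1 dx dy e1 e2 yz(3) fp ls inv
        by (intro exI[of _ "(p1, q)"] exI[of _ "(z, q')"] exI[of _ "?L (ys @ [(a, z)])"])
           (auto simp: MT_def)
    qed
  next
    case (2 q1)
    from CT[OF c2 e2 2(1)] show ?thesis
    proof
      assume "a = tau \<and> C2 q1 = C2 q"
      then show ?thesis using 2 dx dy e1 e2
        by (intro exI[of _ "(p, q1)"] exI[of _ dy] exI[of _ "[]"]) (auto simp: MT_def)
    next
      assume "\<exists>ys z. fin_path tr q' (ys @ [(a, z)]) \<and> (\<forall>r\<in>set ys. fst r = tau \<and> C2 (snd r) = C2 q') \<and> C2 z = C2 q1"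
      then obtain ys z where yz: "fin_path tr q' (ys @ [(a, z)])" "\<forall>r\<in>set ys. fst r = tau \<and> C2 (snd r) = C2 q'" "C2 z = C2 q1"
        by blast
      let ?L = "\<lambda>xs. map (\<lambda>(b, w). (b, mrg p' w)) xs"
      have fp: "fin_path tr (mrg p' q') (?L (ys @ [(a, z)]))" using lift_r[OF yz(1)] .
      have ls: "last (mrg p' q' # map snd (?L (ys @ [(a, z)]))) = mrg p' z"
        using last_lift_r[of p' q' "ys @ [(a,z)]"] by simp
      have inv: "\<forall>r\<in>set (?L ys). fst r = tau \<and> Dm (snd r) = Dm (mrg p' q')"
      proof
        fix r assume "r \<in> set (?L ys)"
        then obtain b w where bw: "(b, w) \<in> set ys" "r = (b, mrg p' w)" by auto
        then show "fst r = tau \<and> Dm (snd r) = Dm (mrg p' q')" using yz(2) Dm_mrg[of p' p' w q'] by auto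
      qed
      show ?thesis using 2 dx dy e1 e2 yz(3) fp ls inv
        by (intro exI[of _ "(p, q1)"] exI[of _ "(p', z)"] exI[of _ "?L (ys @ [(a, z)])"])
           (auto simp: MT_def)
    qed
  qed
qed


lemma lift_div_l:
  assumes "inf_path tr p' g" "\<forall>i. fst (g i) = tau \<and> C1 (snd (g i)) = C1 p'"
  shows "\<exists>f. inf_path tr (mrg p' q') f \<and> (\<forall>i. fst (f i) = tau \<and> Dm (snd (f i)) = Dm (mrg p' q'))"
proof -
  define f where "f i = (tau, mrg (snd (g i)) q')" for i
  have ist: "inf_state (mrg p' q') f i = mrg (inf_state p' g i) q'" for i
    by (cases i) (auto simp: inf_state_def f_def)
  have "inf_path tr (mrg p' q') f"
    using assms(1) assms(2) unfolding inf_path_def ist by (auto simp: f_def mstep)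
  moreover have "\<forall>i. fst (f i) = tau \<and> Dm (snd (f i)) = Dm (mrg p' q')"
    using assms(2) Dm_mrg[of "snd (g _)" p' q' q'] by (simp add: f_def)
  ultimately show ?thesis by blast
qed

lemma lift_div_r:
  assumes "inf_path tr q' g" "\<forall>i. fst (g i) = tau \<and> C2 (snd (g i)) = C2 q'"
  shows "\<exists>f. inf_path tr (mrg p' q') f \<and> (\<forall>i. fst (f i) = tau \<and> Dm (snd (f i)) = Dm (mrg p' q'))"
proof -
  define f where "f i = (tau, mrg p' (snd (g i)))" for i
  have ist: "inf_state (mrg p' q') f i = mrg p' (inf_state q' g i)" for i
    by (cases i) (auto simp: inf_state_def f_def)
  have "inf_path tr (mrg p' q') f"
    using assms(1) assms(2) unfolding inf_path_def ist by (auto simp: f_def mstep)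
  moreover have "\<forall>i. fst (f i) = tau \<and> Dm (snd (f i)) = Dm (mrg p' q')"
    using assms(2) Dm_mrg[of p' p' "snd (g _)" q'] by (simp add: f_def)
  ultimately show ?thesis by blast
qed

lemma HD_m:
  assumes H: "\<forall>i. dst (h i) tau (h (Suc i)) \<and> Rp (h i) dy"
  shows "\<exists>f. inf_path tr (case_prod mrg dy) f \<and> (\<forall>i. fst (f i) = tau \<and> Dm (snd (f i)) = Dm (case_prod mrg dy))"
proof -
  obtain p' q' where dy: "dy = (p', q')" by (cases dy)
  define P where "P i = fst (h i)" for i
  define Q where "Q i = snd (h i)" for i
  have hP: "h i = (P i, Q i)" for i by (simp add: P_def Q_def)
  have col: "C1 (P i) = C1 p' \<and> C2 (Q i) = C2 q'" for i using H[rule_format, of i] dy hP[of i] by simp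
  have stp: "(tr (P i) tau (P (Suc i)) \<and> Q (Suc i) = Q i) \<or> (P (Suc i) = P i \<and> tr (Q i) tau (Q (Suc i)))" for i
    using H[rule_format, of i] hP[of i] hP[of "Suc i"] by simp
  define I where "I = {i. tr (P i) tau (P (Suc i)) \<and> Q (Suc i) = Q i}"
  have nI: "i \<notin> I \<Longrightarrow> P (Suc i) = P i \<and> tr (Q i) tau (Q (Suc i))" for i
    using stp[of i] unfolding I_def by blast
  show ?thesis
  proof (cases "finite I")
    case False
    define e where "e = enumerate I"
    have eI: "e k \<in> I" for k unfolding e_def using enumerate_in_set[OF False] .
    have between: "P (e (Suc k)) = P (Suc (e k))" for k
    proof (rule const_seg)
      show "Suc (e k) \<le> e (Suc k)" unfolding e_def using enumerate_step[OF False] by (simp add: Suc_le_eq)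
      show "\<forall>j. Suc (e k) \<le> j \<and> j < e (Suc k) \<longrightarrow> P (Suc j) = P j"
      proof (intro allI impI)
        fix j assume j: "Suc (e k) \<le> j \<and> j < e (Suc k)"
        have "j \<notin> I"
        proof
          assume "j \<in> I"
          then obtain m where m: "e m = j" using enumerate_Ex[OF False] unfolding e_def by blast
          then have "k < m" using j False unfolding e_def by (metis Suc_le_lessD enumerate_mono_iff)
          moreover have "m < Suc k" using j m False unfolding e_def by (metis enumerate_mono_iff)
          ultimately show False by simp
        qed
        then show "P (Suc j) = P j" using nI by blast
      qed
    qed
    define f where "f k = (tau, P (Suc (e k)))" for k
    have ist: "inf_state (P (e 0)) f k = P (e k)" for k
      by (cases k) (auto simp: inf_state_def f_def between)
    have fp: "inf_path tr (P (e 0)) f"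
      unfolding inf_path_def ist using eI by (auto simp: f_def I_def)
    have fc: "\<forall>i. fst (f i) = tau \<and> C1 (snd (f i)) = C1 (P (e 0))"
      using col by (simp add: f_def)
    obtain g where "inf_path tr p' g" "\<forall>i. fst (g i) = tau \<and> C1 (snd (g i)) = C1 p'"
      using DV[OF d1 _ fp fc, of p'] col by blast
    then show ?thesis using lift_div_l[of p' g q'] dy by simp
  next
    case True
    then obtain N where N: "I \<subseteq> {..<N}" using finite_nat_bounded by blast
    have nI2: "P (Suc i) = P i \<and> tr (Q i) tau (Q (Suc i))" if "N \<le> i" for i
    proof -
      have "i \<notin> I" using N that by auto
      then show ?thesis using nI by blast
    qed
    define f where "f k = (tau, Q (Suc (N + k)))" for k
    have ist: "inf_state (Q N) f k = Q (N + k)" for k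
      by (cases k) (auto simp: inf_state_def f_def)
    have fp: "inf_path tr (Q N) f"
      unfolding inf_path_def ist using nI2 by (auto simp: f_def)
    have fc: "\<forall>i. fst (f i) = tau \<and> C2 (snd (f i)) = C2 (Q N)"
      using col by (simp add: f_def)
    obtain g where "inf_path tr q' g" "\<forall>i. fst (g i) = tau \<and> C2 (snd (g i)) = C2 q'"
      using DV[OF d2 _ fp fc, of q'] col by blast
    then show ?thesis using lift_div_r[of q' g p'] dy by simp
  qed
qed

lemma msim_inst: "msim tau tr Dm (case_prod mrg) dst Rp"
proof
  fix dx dy assume "Rp dx dy"
  moreover obtain p q p' q' where "dx = (p, q)" "dy = (p', q')" by (cases dx, cases dy)
  ultimately show "Dm (case_prod mrg dx) = Dm (case_prod mrg dy)"
    using Dm_mrg[of p p' q q'] by simp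
next
  fix dx dy a x' assume "Rp dx dy" "tr (case_prod mrg dx) a x'"
  then show "\<exists>dx' dy' seg. MT tau tr Dm (case_prod mrg) dst Rp dx dy a x' dx' dy' seg" by (rule HT_m)
next
  fix h dy assume "\<forall>i. dst (h i) tau (h (Suc i)) \<and> Rp (h i) dy"
  then show "\<exists>f. inf_path tr (case_prod mrg dy) f \<and> (\<forall>i. fst (f i) = tau \<and> Dm (snd (f i)) = Dm (case_prod mrg dy))"
    by (rule HD_m)
qed

lemma link:
  assumes "(x, y) \<in> Rm"
  shows "ctraces tau tr Dm x = ctraces tau tr Dm y \<and> div_ctraces tau tr Dm x = div_ctraces tau tr Dm y"
proof -
  obtain p q p' q' where e: "x = mrg p q" "y = mrg p' q'" "C1 p = C1 p'" "C2 q = C2 q'"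
    using assms unfolding Rm_def by blast
  interpret msim tau tr Dm "case_prod mrg" dst Rp by (rule msim_inst)
  have r1: "Rp (p, q) (p', q')" and r2: "Rp (p', q') (p, q)" using e by auto
  show ?thesis using match_ctraces[OF r1] match_ctraces[OF r2] e by auto
qed

lemma Dm_good: "consistent tau tr Dm \<and> div_preserving tau tr Dm"
proof -
  have "ctraces tau tr Dm x = ctraces tau tr Dm y \<and> div_ctraces tau tr Dm x = div_ctraces tau tr Dm y"
    if "(x, y) \<in> Rm\<^sup>*" for x y
    using that
  proof (induction rule: rtrancl_induct)
    case (step y z) then show ?case using link[of y z] by simp
  qed simp
  then show ?thesis unfolding consistent_def div_preserving_def using Dm_eqD by blast
qed

end

theorem theorem5p2:
  fixes tau :: 'a and tr :: "'s \<Rightarrow> 'a \<Rightarrow> 's \<Rightarrow> bool" and mrg :: "'s \<Rightarrow> 's \<Rightarrow> 's"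
  assumes "is_merge tr mrg"
    and "bbisim_div tau tr s t"
    and "bbisim_div tau tr u v"
  shows "bbisim_div tau tr (mrg s u) (mrg t v)"
proof -
  obtain C1 :: "'s \<Rightarrow> 's set" where C1: "consistent tau tr C1" "div_preserving tau tr C1" "C1 s = C1 t"
    using assms(2) unfolding bbisim_div_def by blast
  obtain C2 :: "'s \<Rightarrow> 's set" where C2: "consistent tau tr C2" "div_preserving tau tr C2" "C2 u = C2 v"
    using assms(3) unfolding bbisim_div_def by blast
  interpret mctx tau tr mrg C1 C2 using assms(1) C1 C2 by unfold_locales
  show ?thesis unfolding bbisim_div_def using Dm_good Dm_mrg[OF C1(3) C2(3)] by blast
qed


end
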